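(* Let $n\ge1$, $q$ a prime power, $s\in\mathbb{F}_q$, and let $(\mathsf{Enc},\mathcal{A})$ be an $n$-party one-round aggregation protocol over $\mathbb{F}_q$ with encoder $\mathsf{Enc}:\mathbb{F}_q\to[\ell]^m$. For $\mathbf{x}\in\mathcal{B}_s$ and $\mathbf{y}\in[\ell]^{nm}$ let $p_{\mathbf{x},\mathbf{y}}=\Pr_{Y\sim\mathcal{S}^{\mathsf{Enc}}_{\mathbf{x}}}[Y=\mathbf{y}]$, $p_{\mathbf{y}}=\sum_{\mathbf{x}\in\mathcal{B}_s}p_{\mathbf{x},\mathbf{y}}$, and $d_{\mathbf{y}}=q^{-(2n-2)}\sum_{\mathbf{x}\in\mathcal{B}_s}\sum_{\mathbf{x}'\in\mathcal{B}_s}|p_{\mathbf{x},\mathbf{y}}-p_{\mathbf{x}',\mathbf{y}}|$. Then for every $\mathbf{y}\in[\ell]^{nm}$, $$d_{\mathbf{y}}\ge 2\left(1-\frac{n^{nm}}{q^{n-1}}\right)\frac{p_{\mathbf{y}}}{q^{n-1}}.$$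
   Context: $\mathcal{B}_s=\{\mathbf{x}\in\mathbb{F}_q^n:\sum_ix_i=s\}$. An $n$-party one-round aggregation protocol over $\mathbb{F}_q$ with $m$ messages per party consists of a randomized encoder $\mathsf{Enc}:\mathbb{F}_q\to[\ell]^m$ (for some positive integer $\ell$; each party applies it to its input with independent randomness) and an analyzer $\mathcal{A}:[\ell]^{nm}\to\mathbb{F}_q$ such that for every $\mathbf{x}\in\mathbb{F}_q^n$, every possible realization of the encodings $\mathsf{Enc}(x_1),\dots,\mathsf{Enc}(x_n)$, and every permutation $\pi$ of $[nm]$, the analyzer applied to the concatenation $(\mathsf{Enc}(x_1),\dots,\mathsf{Enc}(x_n))$ with coordinates permuted by $\pi$ outputs $\sum_i x_i$. $\mathcal{S}^{\mathsf{Enc}}_{\mathbf{x}}$ is the distribution on $[\ell]^{nm}$ of this concatenation after applying an independent uniformly random permutation of the $nm$ coordinates. *)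

theory Defs
  imports "HOL-Probability.Probability_Mass_Function" "HOL-Combinatorics.Permutations"
begin

text \<open>Inputs x in F_q^n are lists of length n; [l] is modelled as {0..<l};
  messages are lists of naturals. A randomized encoder is a map to pmfs.\<close>

definition B_set :: "nat \<Rightarrow> 'a::{finite,field} \<Rightarrow> 'a list set" where
  "B_set n s = {x. length x = n \<and> sum_list x = s}"

fun concat_enc :: "('a \<Rightarrow> nat list pmf) \<Rightarrow> 'a list \<Rightarrow> nat list pmf" where
  "concat_enc E [] = return_pmf []"
| "concat_enc E (x # xs) =
     bind_pmf (E x) (\<lambda>u. bind_pmf (concat_enc E xs) (\<lambda>v. return_pmf (u @ v)))"

definition shuffled :: "('a \<Rightarrow> nat list pmf) \<Rightarrow> 'a list \<Rightarrow> nat list pmf" where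
  "shuffled E x =
     bind_pmf (concat_enc E x) (\<lambda>ys.
       map_pmf (\<lambda>\<pi>. permute_list \<pi> ys) (pmf_of_set {\<pi>. \<pi> permutes {..<length ys}}))"

definition aggregation_protocol ::
  "nat \<Rightarrow> nat \<Rightarrow> nat \<Rightarrow> ('a::{finite,field} \<Rightarrow> nat list pmf) \<Rightarrow> (nat list \<Rightarrow> 'a) \<Rightarrow> bool" where
  "aggregation_protocol n m l Enc A \<longleftrightarrow>
     0 < l \<and>
     (\<forall>a. \<forall>u \<in> set_pmf (Enc a). length u = m \<and> set u \<subseteq> {..<l}) \<and>
     (\<forall>x us \<pi>. length x = n \<longrightarrow> length us = n \<longrightarrow>
        (\<forall>i<n. us ! i \<in> set_pmf (Enc (x ! i))) \<longrightarrow>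
        \<pi> permutes {..<n * m} \<longrightarrow>
        A (permute_list \<pi> (concat us)) = sum_list x)"

end

theory Submission
  imports Defs
begin

lemma sum_list_upd:
  fixes xs :: "'b::cancel_comm_monoid_add list"
  shows "i < length xs \<Longrightarrow> sum_list (xs[i:=v]) + xs!i = sum_list xs + v"
proof (induction xs arbitrary: i)
  case Nil then show ?case by simp
next
  case (Cons a xs)
  then show ?case by (cases i) (simp_all add: add_ac)
qed

lemma concat_enc_support:
  "ys \<in> set_pmf (concat_enc E x) \<Longrightarrow>
   \<exists>us. length us = length x \<and> (\<forall>i<length x. us!i \<in> set_pmf (E (x!i))) \<and> ys = concat us"
proof (induction x arbitrary: ys)
  case Nil then show ?case by simp
next
  case (Cons a xs)
  then obtain u v where u: "u \<in> set_pmf (E a)" and v: "v \<in> set_pmf (concat_enc E xs)"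
    and ys: "ys = u @ v" by auto
  from Cons.IH[OF v] obtain us where "length us = length xs"
    "\<forall>i<length xs. us!i \<in> set_pmf (E (xs!i))" "v = concat us" by blast
  then show ?case using u ys
    by (intro exI[of _ "u # us"]) (auto simp: nth_Cons split: nat.splits)
qed

lemma shuffled_support:
  assumes "pmf (shuffled E x) y > 0"
  shows "\<exists>us. length us = length x \<and> (\<forall>i<length x. us!i \<in> set_pmf (E (x!i))) \<and> mset y = mset (concat us)"
proof -
  have "y \<in> set_pmf (shuffled E x)" using assms by (simp add: set_pmf_eq')
  then obtain ys \<pi> where ys: "ys \<in> set_pmf (concat_enc E x)"
    and pi: "\<pi> \<in> set_pmf (pmf_of_set {\<pi>. \<pi> permutes {..<length ys}})"
    and y: "y = permute_list \<pi> ys"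
    unfolding shuffled_def by auto
  have "finite {\<pi>. \<pi> permutes {..<length ys}}" by (simp add: finite_permutations)
  moreover have "id \<in> {\<pi>. \<pi> permutes {..<length ys}}" by simp
  ultimately have "\<pi> permutes {..<length ys}" using pi by (subst (asm) set_pmf_of_set) blast+
  then have "mset y = mset ys" using y by simp
  with concat_enc_support[OF ys] show ?thesis by metis
qed

lemma determination:
  assumes P: "aggregation_protocol n m l Enc A"
    and lx: "length x = n" and lx': "length x' = n"
    and lu: "length us = n" and lu': "length us' = n"
    and su: "\<forall>i<n. us!i \<in> set_pmf (Enc (x!i))"
    and su': "\<forall>i<n. us'!i \<in> set_pmf (Enc (x'!i))"
    and eq: "map mset us = map mset us'"
  shows "x = x'"
proof (rule nth_equalityI)
  show "length x = length x'" using lx lx' by simp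
next
  fix i assume "i < length x"
  then have i: "i < n" using lx by simp
  define z where "z = x[i := x'!i]"
  define vs where "vs = us[i := us'!i]"
  have corr: "\<And>x us \<pi>. length x = n \<Longrightarrow> length us = n \<Longrightarrow>
        (\<forall>i<n. us ! i \<in> set_pmf (Enc (x ! i))) \<Longrightarrow>
        \<pi> permutes {..<n * m} \<Longrightarrow> A (permute_list \<pi> (concat us)) = sum_list x"
    using P unfolding aggregation_protocol_def by blast
  have lenm: "\<And>a u. u \<in> set_pmf (Enc a) \<Longrightarrow> length u = m"
    using P unfolding aggregation_protocol_def by blast
  have sv: "\<forall>j<n. vs!j \<in> set_pmf (Enc (z!j))"
    using su su' i lu lx unfolding vs_def z_def by (auto simp: nth_list_update)
  have lz: "length z = n" "length vs = n" using lx lu unfolding z_def vs_def by auto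
  have "mset (us!i) = mset (us'!i)" using eq i lu lu' by (metis nth_map)
  then have "map mset vs = map mset us" unfolding vs_def
    by (metis list_update_id map_update)
  then have ms: "mset (concat vs) = mset (concat us)" by (simp add: mset_concat)
  have lc: "length (concat us) = n * m"
  proof -
    have "\<forall>u\<in>set us. length u = m" using su lenm lu by (metis in_set_conv_nth)
    then have "sum_list (map length us) = length us * m" by (induction us) auto
    then show ?thesis using lu by (simp add: length_concat mult.commute)
  qed
  obtain p where p: "p permutes {..<length (concat us)}" "permute_list p (concat us) = concat vs"
    using mset_eq_permutation[OF ms] by blast
  have "sum_list z = A (permute_list id (concat vs))"
    using corr[OF lz sv, of id] by simp
  also have "\<dots> = A (permute_list p (concat us))" using p by simp
  also have "\<dots> = sum_list x" using corr[OF lx lu su, of p] p lc by simp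
  finally have "sum_list z = sum_list x" .
  moreover have "sum_list z + x!i = sum_list x + x'!i"
    unfolding z_def using sum_list_upd[of i x "x'!i"] i lx by simp
  ultimately show "x!i = x'!i" by simp
qed

definition T :: "nat \<Rightarrow> 'b multiset \<Rightarrow> 'b multiset list set" where
  "T n M = {ts. length ts = n \<and> sum_list ts = M}"

lemma in_sum_list_sub: "N \<in> set (ts :: 'b multiset list) \<Longrightarrow> N \<subseteq># sum_list ts"
proof (induction ts)
  case Nil then show ?case by simp
next
  case (Cons a ts)
  then show ?case by (auto intro: subset_mset.trans[OF _ mset_subset_eq_add_right])
qed

lemma T_sub: "T n M \<subseteq> {ts. set ts \<subseteq> {N. N \<subseteq># M} \<and> length ts = n}"
  unfolding T_def using in_sum_list_sub by blast

lemma finite_submsets: "finite {N. N \<subseteq># M}"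
proof -
  have "{N. N \<subseteq># M} \<subseteq> mset ` {xs. set xs \<subseteq> set_mset M \<and> length xs \<le> size M}"
  proof
    fix N assume "N \<in> {N. N \<subseteq># M}"
    then have N: "N \<subseteq># M" by simp
    obtain xs where xs: "mset xs = N" using ex_mset by blast
    have "set xs \<subseteq> set_mset M" using xs N by (metis set_mset_mono set_mset_mset)
    moreover have "length xs \<le> size M" using xs N by (metis size_mset size_mset_mono)
    ultimately show "N \<in> mset ` {xs. set xs \<subseteq> set_mset M \<and> length xs \<le> size M}" using xs by blast
  qed
  moreover have "finite {xs. set xs \<subseteq> set_mset M \<and> length xs \<le> size M}"
    by (rule finite_lists_length_le) simp
  ultimately show ?thesis by (meson finite_imageI finite_subset)
qed

lemma T_finite: "finite (T n M)"
  by (rule finite_subset[OF T_sub]) (simp add: finite_lists_length_eq finite_submsets)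

lemma in_sum_list_ex: "a \<in># sum_list (ts :: 'b multiset list) \<Longrightarrow> \<exists>i<length ts. a \<in># ts!i"
proof (induction ts)
  case Nil then show ?case by simp
next
  case (Cons b ts)
  show ?case
  proof (cases "a \<in># b")
    case True then show ?thesis by (intro exI[of _ 0]) simp
  next
    case False
    with Cons.prems have "a \<in># sum_list ts" by simp
    then obtain i where "i < length ts" "a \<in># ts!i" using Cons.IH by blast
    then show ?thesis by (intro exI[of _ "Suc i"]) simp
  qed
qed

lemma mset_cancel_aux: "(X::'b multiset) + ti = S + (ti - {#a#}) \<Longrightarrow> a \<in># ti \<Longrightarrow> X + {#a#} = S"
proof -
  assume h: "X + ti = S + (ti - {#a#})" and a: "a \<in># ti"
  from a obtain r where r: "ti = add_mset a r" by (blast dest: multi_member_split)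
  from h have "(X + {#a#}) + r = S + r" unfolding r by simp
  then show "X + {#a#} = S" by simp
qed

lemma T_card: "card (T n M) \<le> n ^ size M"
proof (induction M)
  case empty
  have sub0: "T n ({#}::'a multiset) \<subseteq> {replicate n {#}}"
  proof
    fix ts assume "ts \<in> T n {#}"
    then have "length ts = n" "sum_list ts = {#}" unfolding T_def by auto
    then show "ts \<in> {replicate n {#}}" using in_sum_list_sub[of _ ts]
      by (auto simp: replicate_length_same[symmetric] intro!: replicate_eqI)
  qed
  have "card (T n ({#}::'a multiset)) \<le> card {replicate n {#}}" using card_mono[OF _ sub0] by simp
  then have "card (T n ({#}::'a multiset)) \<le> 1" by simp
  then show ?case by simp
next
  case (add a M)
  define idx where "idx ts = (LEAST i. i < length ts \<and> a \<in># ts!i)" for ts :: "'a multiset list"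
  define g where "g ts = (ts[idx ts := ts!idx ts - {#a#}], idx ts)" for ts
  have key: "idx ts < length ts \<and> a \<in># ts ! idx ts" if "ts \<in> T n (add_mset a M)" for ts
  proof -
    from that have "a \<in># sum_list ts" unfolding T_def by simp
    from in_sum_list_ex[OF this] obtain i where "i < length ts \<and> a \<in># ts!i" by blast
    then show ?thesis unfolding idx_def by (rule LeastI)
  qed
  have img: "g ` T n (add_mset a M) \<subseteq> T n M \<times> {..<n}"
  proof
    fix p assume "p \<in> g ` T n (add_mset a M)"
    then obtain ts where ts: "ts \<in> T n (add_mset a M)" and p: "p = g ts" by blast
    let ?i = "idx ts"
    have k: "?i < length ts" "a \<in># ts ! ?i" using key[OF ts] by auto
    have "sum_list (ts[?i := ts!?i - {#a#}]) + ts!?i = sum_list ts + (ts!?i - {#a#})"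
      by (rule sum_list_upd[OF k(1)])
    then have "sum_list (ts[?i := ts!?i - {#a#}]) + {#a#} = sum_list ts"
      using k(2) by (rule mset_cancel_aux)
    then have "sum_list (ts[?i := ts!?i - {#a#}]) = M" using ts unfolding T_def by simp
    then show "p \<in> T n M \<times> {..<n}" using ts k p unfolding g_def T_def by auto
  qed
  have inj: "inj_on g (T n (add_mset a M))"
  proof
    fix ts ts' assume ts: "ts \<in> T n (add_mset a M)" and ts': "ts' \<in> T n (add_mset a M)"
      and e: "g ts = g ts'"
    define F where "F p = (fst p)[snd p := (fst p)!snd p + {#a#}]" for p :: "'a multiset list \<times> nat"
    have rec: "F (g t) = t" if "t \<in> T n (add_mset a M)" for t
      using key[OF that] unfolding g_def F_def by simp
    have "ts = F (g ts)" using rec[OF ts] by simp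
    also have "\<dots> = F (g ts')" using e by simp
    also have "\<dots> = ts'" using rec[OF ts'] by simp
    finally show "ts = ts'" .
  qed
  have "card (T n (add_mset a M)) \<le> card (T n M \<times> {..<n})"
    using card_inj_on_le[OF inj img] T_finite[of n M] by (simp add: finite_cartesian_product)
  also have "\<dots> = card (T n M) * n" by (simp add: card_cartesian_product)
  also have "\<dots> \<le> n ^ size M * n" using add by simp
  finally show ?case by (simp add: mult.commute)
qed


lemma finite_B: "finite (B_set n (s::'a::{finite,field}))"
proof -
  have "finite {xs. set xs \<subseteq> (UNIV::'a set) \<and> length xs = n}" by (rule finite_lists_length_eq) simp
  moreover have "B_set n s \<subseteq> {xs. set xs \<subseteq> (UNIV::'a set) \<and> length xs = n}" by (auto simp: B_set_def)
  ultimately show ?thesis using finite_subset by blast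
qed

lemma card_B_ge:
  assumes "n \<ge> 1"
  shows "card (B_set n (s::'a::{finite,field})) \<ge> CARD('a) ^ (n - 1)"
proof -
  define h where "h zs = zs @ [s - sum_list zs]" for zs :: "'a list"
  have inj: "inj_on h {zs. set zs \<subseteq> UNIV \<and> length zs = n - 1}"
    by (auto simp: inj_on_def h_def)
  have img: "h ` {zs. set zs \<subseteq> UNIV \<and> length zs = n - 1} \<subseteq> B_set n s"
    using assms by (auto simp: h_def B_set_def)
  have "card {zs. set zs \<subseteq> (UNIV::'a set) \<and> length zs = n - 1} = CARD('a) ^ (n - 1)"
    by (rule card_lists_length_eq) simp
  then show ?thesis using card_inj_on_le[OF inj img finite_B] by simp
qed

lemma support_card:
  assumes P: "aggregation_protocol n m l Enc A" and ly: "length y = n * m"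
  shows "card {x \<in> B_set n s. pmf (shuffled Enc x) y > 0} \<le> n ^ (n * m)"
proof -
  let ?S = "{x \<in> B_set n s. pmf (shuffled Enc x) y > 0}"
  define U where "U x = (SOME us. length us = length x \<and> (\<forall>i<length x. us!i \<in> set_pmf (Enc (x!i))) \<and> mset y = mset (concat us))" for x
  have U: "length (U x) = n \<and> (\<forall>i<n. U x!i \<in> set_pmf (Enc (x!i))) \<and> mset y = mset (concat (U x))"
    if "x \<in> ?S" for x
  proof -
    from that have ln: "length x = n" and pos: "pmf (shuffled Enc x) y > 0" by (auto simp: B_set_def)
    from shuffled_support[OF pos] have "\<exists>us. length us = length x \<and> (\<forall>i<length x. us!i \<in> set_pmf (Enc (x!i))) \<and> mset y = mset (concat us)" .
    then have "length (U x) = length x \<and> (\<forall>i<length x. U x!i \<in> set_pmf (Enc (x!i))) \<and> mset y = mset (concat (U x))"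
      unfolding U_def by (rule someI_ex)
    then show ?thesis using ln by simp
  qed
  define G where "G x = map mset (U x)" for x
  have img: "G ` ?S \<subseteq> T n (mset y)"
  proof
    fix t assume "t \<in> G ` ?S"
    then obtain x where x: "x \<in> ?S" "t = G x" by blast
    show "t \<in> T n (mset y)" using U[OF x(1)] x(2) unfolding T_def G_def by (simp add: mset_concat)
  qed
  have inj: "inj_on G ?S"
  proof
    fix x x' assume x: "x \<in> ?S" and x': "x' \<in> ?S" and e: "G x = G x'"
    have lx: "length x = n" "length x' = n" using x x' by (auto simp: B_set_def)
    show "x = x'"
      using determination[OF P lx _ _ _ _ e[unfolded G_def]] U[OF x] U[OF x'] by blast
  qed
  have "card ?S \<le> card (T n (mset y))" using card_inj_on_le[OF inj img T_finite] .
  also have "\<dots> \<le> n ^ size (mset y)" by (rule T_card)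
  finally show ?thesis using ly by simp
qed

theorem mainTheorem13:
  fixes n m l :: nat and s :: "'a::{finite,field}"
    and Enc :: "'a \<Rightarrow> nat list pmf" and A :: "nat list \<Rightarrow> 'a"
    and y :: "nat list"
  assumes "n \<ge> 1"
    and "aggregation_protocol n m l Enc A"
    and "length y = n * m" and "set y \<subseteq> {..<l}"
  shows "(1 / real CARD('a) ^ (2 * n - 2)) *
           (\<Sum>x\<in>B_set n s. \<Sum>x'\<in>B_set n s. \<bar>pmf (shuffled Enc x) y - pmf (shuffled Enc x') y\<bar>)
         \<ge> 2 * (1 - real n ^ (n * m) / real CARD('a) ^ (n - 1)) *
           (\<Sum>x\<in>B_set n s. pmf (shuffled Enc x) y) / real CARD('a) ^ (n - 1)"
proof -
  define B where "B = B_set n s"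
  define P where "P x = pmf (shuffled Enc x) y" for x
  define S where "S = {x \<in> B. P x > 0}"
  define Q where "Q = real CARD('a) ^ (n - 1)"
  define K where "K = real n ^ (n * m)"
  define p where "p = (\<Sum>x\<in>B. P x)"
  define D where "D = (\<Sum>x\<in>B. \<Sum>x'\<in>B. \<bar>P x - P x'\<bar>)"
  have finB: "finite B" unfolding B_def by (rule finite_B)
  have SB: "S \<subseteq> B" unfolding S_def by auto
  have finS: "finite S" using finB SB finite_subset by blast
  have P0: "P x \<ge> 0" for x unfolding P_def by simp
  have Pout: "P x = 0" if "x \<in> B - S" for x using that P0[of x] unfolding S_def by force
  have Qpos: "Q > 0" unfolding Q_def by simp
  have cSn: "card S \<le> n ^ (n * m)" unfolding S_def B_def P_def
    by (rule support_card[OF assms(2) assms(3)])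
  have cS: "real (card S) \<le> K"
  proof -
    have "real (card S) \<le> real (n ^ (n * m))" using cSn by (simp only: of_nat_le_iff)
    then show ?thesis unfolding K_def by simp
  qed
  have cBn: "card B \<ge> CARD('a) ^ (n - 1)" unfolding B_def by (rule card_B_ge[OF assms(1)])
  have cB: "real (card B) \<ge> Q"
  proof -
    have "real (CARD('a) ^ (n - 1)) \<le> real (card B)" using cBn by (simp only: of_nat_le_iff)
    then show ?thesis unfolding Q_def by simp
  qed
  have cSB: "card S \<le> card B" by (rule card_mono[OF finB SB])
  have "card (B - S) = card B - card S" by (rule card_Diff_subset[OF finS SB])
  then have "real (card (B - S)) = real (card B) - real (card S)" using cSB by (simp add: of_nat_diff)
  then have cBS: "real (card (B - S)) \<ge> Q - K" using cS cB by linarith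
  have pS: "p = (\<Sum>x\<in>S. P x)"
    unfolding p_def by (rule sum.mono_neutral_right[OF finB SB]) (simp add: Pout)
  have p0: "p \<ge> 0" unfolding p_def using P0 by (simp add: sum_nonneg)
  have nn: "\<And>x. (\<Sum>x'\<in>B. \<bar>P x - P x'\<bar>) \<ge> 0" by (simp add: sum_nonneg)
  have D1: "D = (\<Sum>x\<in>S. \<Sum>x'\<in>B. \<bar>P x - P x'\<bar>) + (\<Sum>x\<in>B - S. \<Sum>x'\<in>B. \<bar>P x - P x'\<bar>)"
    unfolding D_def using sum.subset_diff[OF SB finB] by (simp add: add.commute)
  have part1: "(\<Sum>x\<in>S. \<Sum>x'\<in>B. \<bar>P x - P x'\<bar>) \<ge> real (card (B - S)) * p"
  proof -
    have "(\<Sum>x\<in>S. \<Sum>x'\<in>B. \<bar>P x - P x'\<bar>) \<ge> (\<Sum>x\<in>S. \<Sum>x'\<in>B - S. \<bar>P x - P x'\<bar>)"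
      by (intro sum_mono sum_mono2) (auto simp: finB)
    also have "(\<Sum>x\<in>S. \<Sum>x'\<in>B - S. \<bar>P x - P x'\<bar>) = (\<Sum>x\<in>S. real (card (B - S)) * P x)"
      by (intro sum.cong refl) (simp add: Pout P0)
    also have "\<dots> = real (card (B - S)) * p" by (simp add: pS sum_distrib_left)
    finally show ?thesis by simp
  qed
  have part2: "(\<Sum>x\<in>B - S. \<Sum>x'\<in>B. \<bar>P x - P x'\<bar>) \<ge> real (card (B - S)) * p"
  proof -
    have "(\<Sum>x\<in>B - S. \<Sum>x'\<in>B. \<bar>P x - P x'\<bar>) \<ge> (\<Sum>x\<in>B - S. \<Sum>x'\<in>S. \<bar>P x - P x'\<bar>)"
      by (intro sum_mono sum_mono2) (auto simp: finB SB)
    also have "(\<Sum>x\<in>B - S. \<Sum>x'\<in>S. \<bar>P x - P x'\<bar>) = (\<Sum>x\<in>B - S. p)"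
      by (intro sum.cong refl) (simp add: Pout P0 pS)
    also have "\<dots> = real (card (B - S)) * p" by simp
    finally show ?thesis by simp
  qed
  have Dge: "D \<ge> 2 * (Q - K) * p"
  proof -
    have "2 * (Q - K) * p \<le> 2 * real (card (B - S)) * p"
      using cBS p0 by (simp add: mult_right_mono)
    then show ?thesis using D1 part1 part2 by linarith
  qed
  have Q2: "real CARD('a) ^ (2 * n - 2) = Q * Q"
    unfolding Q_def by (simp add: power_add[symmetric] mult_2[symmetric] diff_mult_distrib2 mult.commute)
  have "2 * (1 - K / Q) * p / Q = 2 * (Q - K) * p / (Q * Q)"
    using Qpos by (simp add: field_simps)
  also have "\<dots> \<le> D / (Q * Q)"
    using Qpos by (intro divide_right_mono[OF Dge]) simp
  also have "\<dots> = (1 / real CARD('a) ^ (2 * n - 2)) * D" by (simp add: Q2)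
  finally have fin: "2 * (1 - K / Q) * p / Q \<le> (1 / real CARD('a) ^ (2 * n - 2)) * D" .
  show ?thesis using fin by (simp only: D_def p_def P_def B_def K_def Q_def)
qed

end
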